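(* Let $B$ be the open unit ball of $\mathbb{C}^n$ for a norm $\|\cdot\|$ and let $f:\Delta\to\mathbb{C}^n$ be a holomorphic map with $f(\Delta)\subset\overline B$. Then $\|f(0)+\zeta(f(z)-f(0))\|\le 1$ for every $z\in\Delta\setminus\{0\}$ and every $\zeta\in\mathbb{C}$ with $|\zeta|\le\frac{1-|z|}{2|z|}$.
   Context: $\Delta$ is the open unit disc of $\mathbb{C}$. *)

theory Defs
  imports "HOL-Complex_Analysis.Complex_Analysis"
begin

definition is_cnorm :: "(complex^'n \<Rightarrow> real) \<Rightarrow> bool" where
  "is_cnorm N \<longleftrightarrow>
     (\<forall>x. N x \<ge> 0) \<and>
     (\<forall>x. N x = 0 \<longleftrightarrow> x = 0) \<and>
     (\<forall>c x. N (c *s x) = cmod c * N x) \<and>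
     (\<forall>x y. N (x + y) \<le> N x + N y)"

end

theory Submission
  imports Defs
begin

lemma scalar_lemma:
  fixes g :: "complex \<Rightarrow> complex"
  assumes holg: "g holomorphic_on ball 0 1"
    and pos: "\<And>w. w \<in> ball 0 1 \<Longrightarrow> Re (g w) > b"
    and z: "z \<in> ball 0 1" and z0: "z \<noteq> 0"
    and zeta: "cmod \<zeta> \<le> (1 - cmod z) / (2 * cmod z)"
  shows "Re (g 0 + \<zeta> * (g z - g 0)) \<ge> b"
proof -
  define G where "G = (\<lambda>w. g w - of_real b)"
  define a where "a = G 0"
  define \<alpha> where "\<alpha> = Re a"
  have Gpos: "Re (G w) > 0" if "w \<in> ball 0 1" for w
    using pos[OF that] by (simp add: G_def)
  have apos: "\<alpha> > 0" using Gpos[of 0] by (simp add: \<alpha>_def a_def)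
  have den: "G w + cnj a \<noteq> 0" if "w \<in> ball 0 1" for w
  proof -
    have "Re (G w + cnj a) > 0" using Gpos[OF that] apos by (simp add: \<alpha>_def)
    then show ?thesis by (metis order_less_irrefl zero_complex.sel(1))
  qed
  define \<phi> where "\<phi> = (\<lambda>w. (G w - a) / (G w + cnj a))"
  have holG: "G holomorphic_on ball 0 1"
    unfolding G_def by (intro holomorphic_intros holg)
  have hol\<phi>: "\<phi> holomorphic_on ball 0 1"
    unfolding \<phi>_def using den by (intro holomorphic_intros holG) auto
  have \<phi>0: "\<phi> 0 = 0" by (simp add: \<phi>_def a_def)
  have lt: "norm (\<phi> w) < 1" if "norm w < 1" for w
  proof -
    have w: "w \<in> ball 0 1" using that by simp
    have u: "Re (G w) > 0" using Gpos[OF w] .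
    have "(cmod (G w - a))\<^sup>2 < (cmod (G w + cnj a))\<^sup>2"
      using u apos unfolding cmod_power2 \<alpha>_def
      by (simp add: power2_eq_square algebra_simps)
    then have "cmod (G w - a) < cmod (G w + cnj a)"
      using power2_less_imp_less by fastforce
    then show ?thesis using den[OF w] by (simp add: \<phi>_def norm_divide divide_less_eq)
  qed
  have schw: "norm (\<phi> z) \<le> norm z"
    using Schwarz_Lemma(1)[OF hol\<phi> \<phi>0 lt] z by simp
  have eq: "G z - a = \<phi> z * (G z - a + 2 * of_real \<alpha>)"
  proof -
    have e: "G z - a + 2 * of_real \<alpha> = G z + cnj a"
      by (simp add: \<alpha>_def complex_eq_iff)
    show ?thesis unfolding e \<phi>_def using den[OF z] by simp
  qed
  have "cmod (G z - a) \<le> cmod z * (cmod (G z - a) + 2 * \<alpha>)"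
  proof -
    have "cmod (G z - a) = cmod (\<phi> z) * cmod (G z - a + 2 * of_real \<alpha>)"
      by (subst eq) (simp add: norm_mult)
    also have "\<dots> \<le> cmod z * (cmod (G z - a) + 2 * \<alpha>)"
    proof (rule mult_mono[OF schw])
      show "cmod (G z - a + 2 * complex_of_real \<alpha>) \<le> cmod (G z - a) + 2 * \<alpha>"
        using norm_triangle_ineq[of "G z - a" "2 * of_real \<alpha>"] apos
        by (simp add: norm_mult)
    qed auto
    finally show ?thesis .
  qed
  then have bd: "cmod (G z - a) * (1 - cmod z) \<le> 2 * \<alpha> * cmod z"
    by (simp add: algebra_simps)
  have zpos: "cmod z > 0" and zlt: "cmod z < 1" using z z0 by auto
  have "cmod (\<zeta> * (G z - a)) \<le> (1 - cmod z) / (2 * cmod z) * cmod (G z - a)"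
    unfolding norm_mult by (rule mult_right_mono[OF zeta]) simp
  also have "\<dots> = cmod (G z - a) * (1 - cmod z) / (2 * cmod z)" by simp
  also have "\<dots> \<le> 2 * \<alpha> * cmod z / (2 * cmod z)"
    using bd zpos by (intro divide_right_mono) auto
  also have "\<dots> = \<alpha>" using zpos by simp
  finally have c: "cmod (\<zeta> * (G z - a)) \<le> \<alpha>" .
  have "Re (\<zeta> * (G z - a)) \<ge> - \<alpha>"
    using c abs_Re_le_cmod[of "\<zeta> * (G z - a)"] by linarith
  moreover have "g 0 + \<zeta> * (g z - g 0) = of_real b + a + \<zeta> * (G z - a)"
    by (simp add: G_def a_def)
  ultimately show ?thesis by (simp add: \<alpha>_def)
qed


lemma cnorm_basic:
  assumes N: "is_cnorm N"
  shows "N 0 = 0" "N (- x) = N x" "N (x + y) \<le> N x + N y" "N (c *s x) = cmod c * N x"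
    "N x \<ge> 0"
proof -
  show "N 0 = 0" using N unfolding is_cnorm_def by blast
  have "N ((-1) *s x) = cmod (-1) * N x" using N unfolding is_cnorm_def by blast
  then show "N (- x) = N x" by simp
  show "N (x + y) \<le> N x + N y" "N (c *s x) = cmod c * N x" "N x \<ge> 0"
    using N unfolding is_cnorm_def by blast+
qed

lemma cnorm_sum:
  assumes N: "is_cnorm N" and "finite A"
  shows "N (sum g A) \<le> sum (\<lambda>i. N (g i)) A"
  using assms(2)
proof (induction A rule: finite_induct)
  case empty then show ?case using cnorm_basic[OF N] by simp
next
  case (insert x F)
  then show ?case using cnorm_basic(3)[OF N, of "g x" "sum g F"] by simp
qed

lemma cnorm_bound:
  fixes N :: "complex^'n \<Rightarrow> real"
  assumes N: "is_cnorm N"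
  shows "N x \<le> (\<Sum>i\<in>UNIV. N (axis i 1)) * norm x"
proof -
  have "N x = N (\<Sum>i\<in>UNIV. x$i *s axis i 1)" by (simp add: basis_expansion)
  also have "\<dots> \<le> (\<Sum>i\<in>UNIV. N (x$i *s axis i 1))" by (rule cnorm_sum[OF N]) simp
  also have "\<dots> = (\<Sum>i\<in>UNIV. cmod (x$i) * N (axis i 1))"
    using cnorm_basic(4)[OF N] by simp
  also have "\<dots> \<le> (\<Sum>i\<in>UNIV. norm x * N (axis i 1))"
    by (intro sum_mono mult_right_mono cnorm_basic(5)[OF N] Finite_Cartesian_Product.norm_nth_le)
  also have "\<dots> = (\<Sum>i\<in>UNIV. N (axis i 1)) * norm x"
    by (simp add: sum_distrib_left mult.commute)
  finally show ?thesis .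
qed

lemma cnorm_cont:
  fixes N :: "complex^'n \<Rightarrow> real"
  assumes N: "is_cnorm N"
  shows "continuous_on UNIV N"
proof -
  define C where "C = (\<Sum>i\<in>UNIV. N (axis i (1::complex)))"
  have C0: "C \<ge> 0" unfolding C_def by (intro sum_nonneg cnorm_basic(5)[OF N])
  have "C-lipschitz_on UNIV N"
  proof (rule lipschitz_onI[OF _ C0])
    fix x y :: "complex^'n"
    have a: "N x \<le> N y + N (x - y)" using cnorm_basic(3)[OF N, of y "x - y"] by simp
    have b: "N y \<le> N x + N (y - x)" using cnorm_basic(3)[OF N, of x "y - x"] by simp
    have c: "N (y - x) = N (x - y)" using cnorm_basic(2)[OF N, of "x - y"] by simp
    have "N (x - y) \<le> C * norm (x - y)" unfolding C_def by (rule cnorm_bound[OF N])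
    then show "dist (N x) (N y) \<le> C * dist x y"
      using a b c by (simp add: dist_real_def dist_norm abs_le_iff)
  qed
  then show ?thesis by (rule lipschitz_on_continuous_on)
qed

theorem lemma13p2:
  fixes N :: "complex^'n \<Rightarrow> real"
    and f :: "complex \<Rightarrow> complex^'n"
  assumes "is_cnorm N"
    and "\<And>i. (\<lambda>w. f w $ i) holomorphic_on ball 0 1"
    and "f ` ball 0 1 \<subseteq> closure {x. N x < 1}"
    and "z \<in> ball 0 1" and "z \<noteq> 0"
    and "cmod \<zeta> \<le> (1 - cmod z) / (2 * cmod z)"
  shows "N (f 0 + \<zeta> *s (f z - f 0)) \<le> 1"
proof (rule ccontr)
  note N = assms(1)
  define K where "K = {x. N x \<le> 1}"
  define w where "w = f 0 + \<zeta> *s (f z - f 0)"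
  assume "\<not> ?thesis"
  then have wK: "w \<notin> K" unfolding K_def w_def by simp
  have closedK: "closed K" unfolding K_def
    using cnorm_cont[OF N] by (intro closed_Collect_le) auto
  have sc: "u *\<^sub>R x = (complex_of_real u) *s x" for u :: real and x :: "complex^'n"
  proof (rule vec_eq_iff[THEN iffD2], rule allI)
    fix i
    have "(u *\<^sub>R x) $ i = u *\<^sub>R (x $ i)" by (rule vector_scaleR_component)
    also have "\<dots> = complex_of_real u * x $ i" by (rule scaleR_conv_of_real)
    also have "\<dots> = (complex_of_real u *s x) $ i" by (rule vector_smult_component[symmetric])
    finally show "(u *\<^sub>R x) $ i = (complex_of_real u *s x) $ i" .
  qed
  have convK: "convex K" unfolding convex_def K_def
  proof (intro ballI allI impI, clarsimp)
    fix x y :: "complex^'n" and u v :: real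
    assume x: "N x \<le> 1" and y: "N y \<le> 1" and u: "0 \<le> u" and v: "0 \<le> v" and uv: "u + v = 1"
    have "N (u *\<^sub>R x + v *\<^sub>R y) \<le> N (u *\<^sub>R x) + N (v *\<^sub>R y)" by (rule cnorm_basic(3)[OF N])
    also have "\<dots> = u * N x + v * N y" using u v by (simp add: sc cnorm_basic(4)[OF N])
    also have "\<dots> \<le> u * 1 + v * 1" using x y u v by (intro add_mono mult_left_mono) auto
    finally show "N (u *\<^sub>R x + v *\<^sub>R y) \<le> 1" using uv by simp
  qed
  obtain a b where ab: "inner a w < b" "\<forall>x\<in>K. inner a x > b"
    using separating_hyperplane_closed_point[OF convK closedK wK] by blast
  have sub: "closure {x. N x < 1} \<subseteq> K"
    by (rule closure_minimal[OF _ closedK]) (auto simp: K_def)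
  define \<phi> where "\<phi> = (\<lambda>x::complex^'n. \<Sum>i\<in>UNIV. cnj (a$i) * x$i)"
  have inner_eq: "inner a x = Re (\<phi> x)" for x
    by (simp add: \<phi>_def inner_vec_def inner_complex_def Re_sum)
  define h where "h = (\<lambda>l. \<phi> (f l))"
  have holh: "h holomorphic_on ball 0 1"
    unfolding h_def \<phi>_def by (intro holomorphic_intros assms(2))
  have hpos: "Re (h l) > b" if "l \<in> ball 0 1" for l
  proof -
    have "f l \<in> K" using assms(3) sub that by blast
    then show ?thesis using ab(2) by (simp add: inner_eq h_def)
  qed
  have "Re (h 0 + \<zeta> * (h z - h 0)) \<ge> b"
    by (rule scalar_lemma[OF holh hpos assms(4,5,6)])
  moreover have "h 0 + \<zeta> * (h z - h 0) = \<phi> w"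
    by (simp add: h_def \<phi>_def w_def sum_distrib_left algebra_simps flip: sum.distrib sum_subtractf)
  ultimately show False using ab(1) inner_eq[of w] by simp
qed

end
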